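(* Let $n\ge3$, let $q\in\mathbb{C}\setminus\{0\}$ not be a root of unity, and put $a=q/(1+q)$, $b=1/(1+q)$. For $i=1,\dots,n-1$ define the $(n-1)\times(n-1)$ matrices \[u_i=(1-\delta_{i,1})\,b\,e_{i,i-1}+e_{ii}+(1-\delta_{i,n-1})\,a\,e_{i,i+1},\] \[v_i=(1-\delta_{i,1})\,b(n-1)\,e_{i,i-1}+(2-n)\,e_{ii}+(1-\delta_{i,n-1})\,a(n-1)\,e_{i,i+1}+E(i).\] Then (a) the Lie algebra generated by $u_1,\dots,u_{n-1}$ is $\mathfrak{gl}_{n-1}(\mathbb{C})$, and (b) the Lie algebra generated by $v_1,\dots,v_{n-1}$ is $\mathfrak{sl}_{n-1}(\mathbb{C})$.
   Context: $e_{ij}$ ($1\le i,j\le n-1$) are the standard matrix units of $(n-1)\times(n-1)$ complex matrices, $E(i)=I_{n-1}-e_{ii}$, and $\delta$ is the Kronecker delta (terms with an index outside $1,\dots,n-1$ are absent). Lie algebras are taken inside $\mathfrak{gl}_{n-1}(\mathbb{C})$ with the commutator bracket. *)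

theory Defs
  imports "Jordan_Normal_Form.Matrix"
begin

text \<open>Matrix unit e_{ij} of size m x m, with 1-based indices i, j in 1..m.
  If an index lies outside 1..m, the term is absent (zero matrix).\<close>
definition emat :: "nat \<Rightarrow> nat \<Rightarrow> nat \<Rightarrow> complex mat" where
  "emat m i j = mat m m (\<lambda>(r, c).
     if 1 \<le> i \<and> i \<le> m \<and> 1 \<le> j \<and> j \<le> m \<and> r = i - 1 \<and> c = j - 1 then 1 else 0)"

definition kdelta :: "nat \<Rightarrow> nat \<Rightarrow> complex" where
  "kdelta i j = (if i = j then 1 else 0)"

definition Emat :: "nat \<Rightarrow> nat \<Rightarrow> complex mat" where
  "Emat m i = one_mat m - emat m i i"

definition ucoef_a :: "complex \<Rightarrow> complex" where "ucoef_a q = q / (1 + q)"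
definition ucoef_b :: "complex \<Rightarrow> complex" where "ucoef_b q = 1 / (1 + q)"

definition umat :: "nat \<Rightarrow> complex \<Rightarrow> nat \<Rightarrow> complex mat" where
  "umat n q i =
     ((1 - kdelta i 1) * ucoef_b q) \<cdot>\<^sub>m emat (n-1) i (i - 1)
     + emat (n-1) i i
     + ((1 - kdelta i (n-1)) * ucoef_a q) \<cdot>\<^sub>m emat (n-1) i (i + 1)"

definition vmat :: "nat \<Rightarrow> complex \<Rightarrow> nat \<Rightarrow> complex mat" where
  "vmat n q i =
     ((1 - kdelta i 1) * ucoef_b q * of_nat (n - 1)) \<cdot>\<^sub>m emat (n-1) i (i - 1)
     + (2 - of_nat n :: complex) \<cdot>\<^sub>m emat (n-1) i i
     + ((1 - kdelta i (n-1)) * ucoef_a q * of_nat (n - 1)) \<cdot>\<^sub>m emat (n-1) i (i + 1)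
     + Emat (n-1) i"

inductive_set lie_gen :: "nat \<Rightarrow> complex mat set \<Rightarrow> complex mat set" for m S where
  gen: "x \<in> S \<Longrightarrow> x \<in> lie_gen m S"
| zero: "zero_mat m m \<in> lie_gen m S"
| add: "x \<in> lie_gen m S \<Longrightarrow> y \<in> lie_gen m S \<Longrightarrow> x + y \<in> lie_gen m S"
| smult: "x \<in> lie_gen m S \<Longrightarrow> c \<cdot>\<^sub>m x \<in> lie_gen m S"
| bracket: "x \<in> lie_gen m S \<Longrightarrow> y \<in> lie_gen m S \<Longrightarrow> x * y - y * x \<in> lie_gen m S"

definition gl_mat :: "nat \<Rightarrow> complex mat set" where
  "gl_mat m = carrier_mat m m"

definition sl_mat :: "nat \<Rightarrow> complex mat set" where
  "sl_mat m = {A \<in> carrier_mat m m. (\<Sum>i<m. A $$ (i, i)) = 0}"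

end

theory Submission
  imports Defs "Jordan_Normal_Form.Determinant"
begin

definition Eu :: "nat \<Rightarrow> nat \<Rightarrow> nat \<Rightarrow> complex mat" where
  "Eu m i j = mat m m (\<lambda>(r,c). if r = i \<and> c = j then 1 else 0)"

lemma Eu_carrier[simp]: "Eu m i j \<in> carrier_mat m m"
  by (simp add: Eu_def)

lemma Eu_dim[simp]: "dim_row (Eu m i j) = m" "dim_col (Eu m i j) = m"
  by (simp_all add: Eu_def)

lemma Eu_index[simp]: "r < m \<Longrightarrow> c < m \<Longrightarrow> Eu m i j $$ (r,c) = (if r = i \<and> c = j then 1 else 0)"
  by (simp add: Eu_def)

lemma EA_index: assumes "A \<in> carrier_mat m m" "r < m" "c < m" "j < m"
  shows "(Eu m i j * A) $$ (r,c) = (if r = i then A $$ (j,c) else 0)"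
proof -
  have "(Eu m i j * A) $$ (r,c) = (\<Sum>s<m. Eu m i j $$ (r,s) * A $$ (s,c))"
    using assms by (simp add: scalar_prod_def Eu_def lessThan_atLeast0)
  also have "\<dots> = (\<Sum>s<m. if s = j then (if r = i then A $$ (j,c) else 0) else 0)"
    using assms by (intro sum.cong) auto
  also have "\<dots> = (if r = i then A $$ (j,c) else 0)" using assms by simp
  finally show ?thesis .
qed

lemma AE_index: assumes "A \<in> carrier_mat m m" "r < m" "c < m" "k < m"
  shows "(A * Eu m k l) $$ (r,c) = (if c = l then A $$ (r,k) else 0)"
proof -
  have "(A * Eu m k l) $$ (r,c) = (\<Sum>s<m. A $$ (r,s) * Eu m k l $$ (s,c))"
    using assms by (simp add: scalar_prod_def Eu_def lessThan_atLeast0)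
  also have "\<dots> = (\<Sum>s<m. if s = k then (if c = l then A $$ (r,k) else 0) else 0)"
    using assms by (intro sum.cong) auto
  also have "\<dots> = (if c = l then A $$ (r,k) else 0)" using assms by simp
  finally show ?thesis .
qed

lemma EAE: assumes "A \<in> carrier_mat m m" "i < m" "j < m" "k < m" "l < m"
  shows "Eu m i j * A * Eu m k l = A $$ (j,k) \<cdot>\<^sub>m Eu m i l"
proof (rule eq_matI)
  fix r c assume rc: "r < dim_row (A $$ (j,k) \<cdot>\<^sub>m Eu m i l)" "c < dim_col (A $$ (j,k) \<cdot>\<^sub>m Eu m i l)"
  then have "r < m" "c < m" by auto
  have 1: "(Eu m i j * A * Eu m k l) $$ (r,c) = (if c = l then (Eu m i j * A) $$ (r,k) else 0)"
    by (rule AE_index) (use assms \<open>r < m\<close> \<open>c < m\<close> in auto)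
  have 2: "(Eu m i j * A) $$ (r,k) = (if r = i then A $$ (j,k) else 0)"
    by (rule EA_index) (use assms \<open>r < m\<close> in auto)
  show "(Eu m i j * A * Eu m k l) $$ (r,c) = (A $$ (j,k) \<cdot>\<^sub>m Eu m i l) $$ (r,c)"
    using 1 2 \<open>r < m\<close> \<open>c < m\<close> by auto
qed (use assms in auto)

definition br :: "complex mat \<Rightarrow> complex mat \<Rightarrow> complex mat \<Rightarrow> complex mat" where
  "br T X Y = X * T * Y - Y * T * X"

lemma br_carrier: "T \<in> carrier_mat m m \<Longrightarrow> X \<in> carrier_mat m m \<Longrightarrow> Y \<in> carrier_mat m m \<Longrightarrow> br T X Y \<in> carrier_mat m m"
  unfolding br_def by (meson minus_carrier_mat mult_carrier_mat)

lemma br_EE: assumes "T \<in> carrier_mat m m" "i < m" "j < m" "k < m" "l < m"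
  shows "br T (Eu m i j) (Eu m k l) = T $$ (j,k) \<cdot>\<^sub>m Eu m i l - T $$ (l,i) \<cdot>\<^sub>m Eu m k j"
  using assms by (simp add: br_def EAE)

lemma br_lin2: assumes T: "T \<in> carrier_mat m m" and X: "X \<in> carrier_mat m m"
  and Y: "Y \<in> carrier_mat m m" and Z: "Z \<in> carrier_mat m m"
  shows "br T X (a \<cdot>\<^sub>m Y - b \<cdot>\<^sub>m Z) = a \<cdot>\<^sub>m br T X Y - b \<cdot>\<^sub>m br T X Z"
proof -
  have XT: "X * T \<in> carrier_mat m m" using X T by simp
  have 1: "X * T * (a \<cdot>\<^sub>m Y - b \<cdot>\<^sub>m Z) = a \<cdot>\<^sub>m (X * T * Y) - b \<cdot>\<^sub>m (X * T * Z)"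
    using mult_minus_distrib_mat[OF XT smult_carrier_mat[OF Y] smult_carrier_mat[OF Z]]
      mult_smult_distrib[OF XT Y] mult_smult_distrib[OF XT Z] by simp
  have 2: "(a \<cdot>\<^sub>m Y - b \<cdot>\<^sub>m Z) * T * X = a \<cdot>\<^sub>m (Y * T * X) - b \<cdot>\<^sub>m (Z * T * X)"
    using minus_mult_distrib_mat[OF smult_carrier_mat[OF Y] smult_carrier_mat[OF Z] T]
      mult_smult_assoc_mat[OF Y T] mult_smult_assoc_mat[OF Z T]
      minus_mult_distrib_mat[OF _ _ X, of "a \<cdot>\<^sub>m (Y * T)" m "b \<cdot>\<^sub>m (Z * T)"]
      mult_smult_assoc_mat[OF _ X, of "Y * T" m] mult_smult_assoc_mat[OF _ X, of "Z * T" m] Y Z T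
    by simp
  show ?thesis unfolding br_def 1 2
    by (rule eq_matI) (use X Y Z T in \<open>auto simp: algebra_simps\<close>)
qed

context
  fixes m :: nat and T :: "complex mat" and Q :: "complex mat set" and d \<alpha> \<beta> :: complex
  assumes T: "T \<in> carrier_mat m m"
  and Tent: "\<And>r c. r < m \<Longrightarrow> c < m \<Longrightarrow> T $$ (r,c) =
      (if c = r then d else if c + 1 = r then \<beta> else if c = r + 1 then \<alpha> else 0)"
  and dnz: "d \<noteq> 0" and anz: "\<alpha> \<noteq> 0" and bnz: "\<beta> \<noteq> 0"
  and Qc: "Q \<subseteq> carrier_mat m m"
  and Q0: "0\<^sub>m m m \<in> Q"
  and Qadd: "\<And>X Y. X \<in> Q \<Longrightarrow> Y \<in> Q \<Longrightarrow> X + Y \<in> Q"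
  and Qsm: "\<And>X c. X \<in> Q \<Longrightarrow> c \<cdot>\<^sub>m X \<in> Q"
  and Qbr: "\<And>X Y. X \<in> Q \<Longrightarrow> Y \<in> Q \<Longrightarrow> br T X Y \<in> Q"
  and Qdiag: "\<And>i. i < m \<Longrightarrow> Eu m i i \<in> Q"
begin

lemma Q_adj: assumes ij: "i < m" "j < m" "i \<noteq> j" and t: "T $$ (i,j) \<noteq> 0"
  shows "Eu m i j \<in> Q"
proof -
  define t1 where "t1 = T $$ (i,j)"
  define t2 where "t2 = T $$ (j,i)"
  have Tii: "T $$ (i,i) = d" using Tent ij by simp
  define Y where "Y = br T (Eu m i i) (Eu m j j)"
  have YQ: "Y \<in> Q" unfolding Y_def using Qbr Qdiag ij by auto
  have Ye: "Y = t1 \<cdot>\<^sub>m Eu m i j - t2 \<cdot>\<^sub>m Eu m j i"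
    unfolding Y_def t1_def t2_def using br_EE[OF T] ij by auto
  define Z where "Z = br T (Eu m i i) Y"
  have ZQ: "Z \<in> Q" unfolding Z_def using Qbr Qdiag ij YQ by auto
  have Ze: "Z = t1 \<cdot>\<^sub>m (d \<cdot>\<^sub>m Eu m i j - t2 \<cdot>\<^sub>m Eu m i i) - t2 \<cdot>\<^sub>m (t1 \<cdot>\<^sub>m Eu m i i - d \<cdot>\<^sub>m Eu m j i)"
    unfolding Z_def Ye br_lin2[OF T Eu_carrier Eu_carrier Eu_carrier]
    using br_EE[OF T] ij Tii unfolding t1_def t2_def by auto
  have t1: "t1 \<noteq> 0" using t t1_def by simp
  have "Eu m i j = (1 / (2 * d * t1)) \<cdot>\<^sub>m (d \<cdot>\<^sub>m Y + Z + (2 * t1 * t2) \<cdot>\<^sub>m Eu m i i)"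
    unfolding Ye Ze
    by (rule eq_matI) (use t1 dnz in \<open>auto simp: field_simps\<close>)
  moreover have "(1 / (2 * d * t1)) \<cdot>\<^sub>m (d \<cdot>\<^sub>m Y + Z + (2 * t1 * t2) \<cdot>\<^sub>m Eu m i i) \<in> Q"
    using YQ ZQ Qdiag ij by (intro Qsm Qadd) auto
  ultimately show ?thesis by simp
qed

lemma Q_off: "Suc i \<le> j \<Longrightarrow> j < m \<Longrightarrow> Eu m i j \<in> Q \<and> Eu m j i \<in> Q"
proof (induction j rule: nat_induct_at_least)
  case base
  then show ?case using Q_adj[of i "Suc i"] Q_adj[of "Suc i" i] Tent anz bnz by auto
next
  case (Suc j)
  then have IH: "Eu m i j \<in> Q" "Eu m j i \<in> Q" by auto
  have A1: "Eu m j (Suc j) \<in> Q" "Eu m (Suc j) j \<in> Q"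
    using Q_adj[of j "Suc j"] Q_adj[of "Suc j" j] Tent anz bnz Suc by auto
  have "br T (Eu m i j) (Eu m j (Suc j)) = d \<cdot>\<^sub>m Eu m i (Suc j) - 0 \<cdot>\<^sub>m Eu m j j"
    using br_EE[OF T, of i j j "Suc j"] Tent Suc by auto
  then have e1: "Eu m i (Suc j) = (1/d) \<cdot>\<^sub>m br T (Eu m i j) (Eu m j (Suc j))"
    by (auto intro!: eq_matI simp: dnz)
  have "br T (Eu m (Suc j) j) (Eu m j i) = d \<cdot>\<^sub>m Eu m (Suc j) i - 0 \<cdot>\<^sub>m Eu m j j"
    using br_EE[OF T, of "Suc j" j j i] Tent Suc by auto
  then have e2: "Eu m (Suc j) i = (1/d) \<cdot>\<^sub>m br T (Eu m (Suc j) j) (Eu m j i)"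
    by (auto intro!: eq_matI simp: dnz)
  show ?case unfolding e1 e2 using IH A1 by (auto intro!: Qsm Qbr)
qed

lemma Q_E: assumes "i < m" "j < m" shows "Eu m i j \<in> Q"
  using Q_off[of i j] Q_off[of j i] Suc_le_eq Qdiag assms by (cases i j rule: linorder_cases) auto

lemma Q_all: assumes X: "X \<in> carrier_mat m m" shows "X \<in> Q"
proof -
  have "finite S \<Longrightarrow> S \<subseteq> {..<m} \<times> {..<m} \<Longrightarrow>
      mat m m (\<lambda>(r,c). if (r,c) \<in> S then X $$ (r,c) else 0) \<in> Q" for S
  proof (induction S rule: finite_induct)
    case empty
    have "mat m m (\<lambda>(r,c). if (r,c) \<in> {} then X $$ (r,c) else 0) = 0\<^sub>m m m"
      by (auto intro!: eq_matI)
    then show ?case using Q0 by metis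
  next
    case (insert p S)
    obtain a b where p: "p = (a,b)" by force
    have ab: "a < m" "b < m" using insert p by auto
    have IH: "mat m m (\<lambda>(r,c). if (r,c) \<in> S then X $$ (r,c) else 0) \<in> Q"
      using insert.IH insert.prems by blast
    have e: "mat m m (\<lambda>(r,c). if (r,c) \<in> insert p S then X $$ (r,c) else 0) =
      mat m m (\<lambda>(r,c). if (r,c) \<in> S then X $$ (r,c) else 0) + X $$ (a,b) \<cdot>\<^sub>m Eu m a b"
      using insert p by (auto intro!: eq_matI)
    show ?case unfolding e by (rule Qadd[OF IH Qsm[OF Q_E[OF ab]]])
  qed
  from this[of "{..<m} \<times> {..<m}"]
  have "mat m m (\<lambda>(r,c). if (r,c) \<in> {..<m} \<times> {..<m} then X $$ (r,c) else 0) \<in> Q" by simp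
  moreover have "mat m m (\<lambda>(r,c). if (r,c) \<in> {..<m} \<times> {..<m} then X $$ (r,c) else 0) = X"
    using X by (auto intro!: eq_matI)
  ultimately show ?thesis by simp
qed

end


lemma P_all:
  fixes m :: nat and T Ti :: "complex mat" and P :: "complex mat set" and d \<alpha> \<beta> :: complex
  assumes T: "T \<in> carrier_mat m m" and Ti: "Ti \<in> carrier_mat m m" and TiT: "Ti * T = 1\<^sub>m m"
  and Tent: "\<And>r c. r < m \<Longrightarrow> c < m \<Longrightarrow> T $$ (r,c) =
      (if c = r then d else if c + 1 = r then \<beta> else if c = r + 1 then \<alpha> else 0)"
  and dnz: "d \<noteq> 0" and anz: "\<alpha> \<noteq> 0" and bnz: "\<beta> \<noteq> 0"
  and Pc: "P \<subseteq> carrier_mat m m"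
  and P0: "0\<^sub>m m m \<in> P"
  and Padd: "\<And>X Y. X \<in> P \<Longrightarrow> Y \<in> P \<Longrightarrow> X + Y \<in> P"
  and Psm: "\<And>X c. X \<in> P \<Longrightarrow> c \<cdot>\<^sub>m X \<in> P"
  and Pbr: "\<And>X Y. X \<in> P \<Longrightarrow> Y \<in> P \<Longrightarrow> X * Y - Y * X \<in> P"
  and Pdiag: "\<And>i. i < m \<Longrightarrow> Eu m i i * T \<in> P"
  shows "carrier_mat m m \<subseteq> P"
proof -
  define Q where "Q = {X \<in> carrier_mat m m. X * T \<in> P}"
  have "X \<in> Q" if X: "X \<in> carrier_mat m m" for X
  proof (rule Q_all[OF T Tent dnz anz bnz, of Q])
    show "Q \<subseteq> carrier_mat m m" unfolding Q_def by auto
    show "0\<^sub>m m m \<in> Q" unfolding Q_def using P0 T by auto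
    show "X + Y \<in> Q" if "X \<in> Q" "Y \<in> Q" for X Y
      using that T add_mult_distrib_mat[of X m m Y T m] Padd unfolding Q_def by auto
    show "c \<cdot>\<^sub>m X \<in> Q" if "X \<in> Q" for X c
      using that T mult_smult_assoc_mat[of X m m T m c] Psm unfolding Q_def by auto
    show "br T X Y \<in> Q" if XY: "X \<in> Q" "Y \<in> Q" for X Y
    proof -
      have Xc: "X \<in> carrier_mat m m" and Yc: "Y \<in> carrier_mat m m" using XY unfolding Q_def by auto
      have "br T X Y * T = (X * T) * (Y * T) - (Y * T) * (X * T)"
        unfolding br_def
        using minus_mult_distrib_mat[of "X * T * Y" m m "Y * T * X" T m]
          assoc_mult_mat[of "X * T" m m Y m T m] assoc_mult_mat[of "Y * T" m m X m T m] Xc Yc T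
        by (metis mult_carrier_mat)
      then show ?thesis using Pbr XY br_carrier[OF T Xc Yc] unfolding Q_def by auto
    qed
    show "Eu m i i \<in> Q" if "i < m" for i using Pdiag that unfolding Q_def by auto
  qed (use X in auto)
  then show ?thesis
  proof (intro subsetI)
    fix Y :: "complex mat" assume Y: "Y \<in> carrier_mat m m"
    have "Y * Ti \<in> Q" using \<open>\<And>X. X \<in> carrier_mat m m \<Longrightarrow> X \<in> Q\<close> Y Ti by auto
    then have "Y * Ti * T \<in> P" unfolding Q_def by auto
    also have "Y * Ti * T = Y" using Y Ti T TiT by simp
    finally show "Y \<in> P" .
  qed
qed

lemma kernel_inv:
  fixes T :: "complex mat"
  assumes T: "T \<in> carrier_mat m m"
  and ker: "\<And>v. v \<in> carrier_vec m \<Longrightarrow> T *\<^sub>v v = 0\<^sub>v m \<Longrightarrow> v = 0\<^sub>v m"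
  shows "\<exists>Ti \<in> carrier_mat m m. Ti * T = 1\<^sub>m m"
proof -
  have "det T \<noteq> 0" using det_0_iff_vec_prod_zero[OF T] ker by auto
  from det_non_zero_imp_unit[OF T this, of undefined]
  show ?thesis unfolding Units_def ring_mat_def by auto
qed


definition Tm :: "nat \<Rightarrow> complex \<Rightarrow> complex \<Rightarrow> complex mat" where
  "Tm m q d = mat m m (\<lambda>(r,c). if c = r then d else if c + 1 = r then ucoef_b q
      else if c = r + 1 then ucoef_a q else 0)"

lemma Tm_carrier[simp]: "Tm m q d \<in> carrier_mat m m" by (simp add: Tm_def)

lemma Tm_index: "r < m \<Longrightarrow> c < m \<Longrightarrow> Tm m q d $$ (r,c) =
   (if c = r then d else if c + 1 = r then ucoef_b q else if c = r + 1 then ucoef_a q else 0)"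
  by (simp add: Tm_def)

lemma Tm_mult_vec: assumes v: "v \<in> carrier_vec m" and r: "r < m"
  shows "(Tm m q d *\<^sub>v v) $ r = (if 0 < r then ucoef_b q * v $ (r - 1) else 0) + d * v $ r
     + (if r + 1 < m then ucoef_a q * v $ (r + 1) else 0)"
proof -
  have "(Tm m q d *\<^sub>v v) $ r = (\<Sum>c<m. Tm m q d $$ (r,c) * v $ c)"
    using v r by (simp add: scalar_prod_def lessThan_atLeast0 Tm_def)
  also have "\<dots> = (\<Sum>c<m. (if c = r then d * v $ c else 0) + (if 0 < r \<and> c = r - 1 then ucoef_b q * v $ c else 0)
      + (if c = r + 1 then ucoef_a q * v $ c else 0))"
    using r by (intro sum.cong) (auto simp: Tm_index)
  also have "\<dots> = (\<Sum>c<m. if c = r then d * v $ c else 0) + (\<Sum>c<m. if 0 < r \<and> c = r - 1 then ucoef_b q * v $ c else 0)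
      + (\<Sum>c<m. if c = r + 1 then ucoef_a q * v $ c else 0)"
    by (simp add: sum.distrib)
  also have "\<dots> = (if 0 < r then ucoef_b q * v $ (r - 1) else 0) + d * v $ r
     + (if r + 1 < m then ucoef_a q * v $ (r + 1) else 0)"
    using r by (simp add: sum.If_cases)
  finally show ?thesis .
qed

lemma geom_sum_c: "((q::complex) - 1) * (\<Sum>j<k. q ^ j) = q ^ k - 1"
  by (induction k) (auto simp: algebra_simps)

lemma Tm_ker:
  fixes q d :: complex
  assumes q0: "q \<noteq> 0" and qr: "\<forall>k::nat. k > 0 \<longrightarrow> q ^ k \<noteq> 1" and dd: "d * d = 1"
    and v: "v \<in> carrier_vec m" and Tv: "Tm m q d *\<^sub>v v = 0\<^sub>v m"
  shows "v = 0\<^sub>v m"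
proof -
  have q1: "1 + q \<noteq> 0"
  proof
    assume "1 + q = 0" then have "q = -1" by (simp add: add_eq_0_iff)
    then have "q ^ 2 = 1" by simp
    with qr show False by auto
  qed
  have qn1: "q \<noteq> 1" using qr[rule_format, of 1] by auto
  define y where "y k = (if 1 \<le> k \<and> k \<le> m then v $ (k - 1) else 0)" for k
  have rec: "y r + d * (1 + q) * y (Suc r) + q * y (Suc (Suc r)) = 0" if r: "r < m" for r
  proof -
    have "(Tm m q d *\<^sub>v v) $ r = 0" using Tv r by simp
    then have "(if 0 < r then ucoef_b q * v $ (r - 1) else 0) + d * v $ r
     + (if r + 1 < m then ucoef_a q * v $ (r + 1) else 0) = 0"
      using Tm_mult_vec[OF v r] by simp
    then have "ucoef_b q * y r + d * y (Suc r) + ucoef_a q * y (Suc (Suc r)) = 0"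
      using r unfolding y_def by (auto split: if_splits)
    moreover have "(1 + q) * (ucoef_b q * y r + d * y (Suc r) + ucoef_a q * y (Suc (Suc r)))
       = y r + d * (1 + q) * y (Suc r) + q * y (Suc (Suc r))"
    proof -
      have "(1 + q) * ucoef_b q = 1" "(1 + q) * ucoef_a q = q"
        using q1 unfolding ucoef_a_def ucoef_b_def by simp_all
      then show ?thesis by (simp add: distrib_left mult.assoc[symmetric]) (simp add: algebra_simps)
    qed
    ultimately show ?thesis by simp
  qed
  define G where "G k = (\<Sum>j<k. q ^ j)" for k
  define C where "C = q * y 1"
  have claim: "Suc k \<le> Suc m \<longrightarrow> q ^ k * y k = C * (-d) ^ (k + 1) * G k
       \<and> q ^ (k + 1) * y (k + 1) = C * (-d) ^ (k + 2) * G (k + 1)" for k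
  proof (induction k)
    case 0
    have "(-d) ^ 2 = 1" using dd by (simp add: power2_eq_square)
    then show ?case using dd by (simp add: y_def G_def C_def)
  next
    case (Suc k)
    show ?case
    proof
      assume k: "Suc (Suc k) \<le> Suc m"
      then have IH1: "q ^ k * y k = C * (-d) ^ (k + 1) * G k"
        and IH2: "q ^ (k + 1) * y (k + 1) = C * (-d) ^ (k + 2) * G (k + 1)" using Suc by auto
      have r: "y k + d * (1 + q) * y (Suc k) + q * y (Suc (Suc k)) = 0" using rec k by auto
      define P where "P = (-d) ^ (k + 1)"
      have P2: "(-d) ^ (k + 2) = - d * P" unfolding P_def by simp
      have P3: "(-d) ^ (k + 3) = P"
      proof -
        have "(-d) ^ (k + 3) = (-d) ^ ((k + 1) + 2)" by (rule arg_cong[where f="\<lambda>n. (-d) ^ n"]) simp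
        also have "\<dots> = (-d) ^ (k + 1) * (-d) ^ 2" by (rule power_add)
        also have "(-d) ^ 2 = 1" using dd by (simp add: power2_eq_square)
        finally show ?thesis unfolding P_def by simp
      qed
      have G1: "G (k + 1) = G k + q ^ k" and G2: "G (k + 2) = G k + q ^ k + q ^ (k + 1)"
        unfolding G_def by simp_all
      have r': "q * y (Suc (Suc k)) = - y k - d * (1 + q) * y (k + 1)" using r add_eq_0_iff[of "y k + d * (1 + q) * y (Suc k)" "q * y (Suc (Suc k))"] by simp
      have "q ^ (k + 2) * y (k + 2) = q ^ (k + 1) * (q * y (Suc (Suc k)))" by (simp add: power_add)
      also have "\<dots> = - q * (q ^ k * y k) - d * (1 + q) * (q ^ (k + 1) * y (k + 1))"
        unfolding r' by (simp add: algebra_simps)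
      also have "\<dots> = C * P * G (k + 2)"
      proof -
        have e: "- q * (C * P * G k) - d * (1 + q) * (C * (- d * P) * (G k + q ^ k))
          = - q * (C * P * G k) + (d * d) * (1 + q) * (C * P * (G k + q ^ k))"
          by (simp add: algebra_simps)
        show ?thesis unfolding IH1 IH2 P2 G1 G2 P_def[symmetric] e dd
          by (simp add: algebra_simps)
      qed
      finally show "q ^ Suc k * y (Suc k) = C * (-d) ^ (Suc k + 1) * G (Suc k) \<and>
          q ^ (Suc k + 1) * y (Suc k + 1) = C * (-d) ^ (Suc k + 2) * G (Suc k + 1)"
        using IH2 P3 by (simp add: numeral_3_eq_3)
    qed
  qed
  have "q ^ (m + 1) * y (m + 1) = C * (-d) ^ (m + 2) * G (m + 1)" using claim[of m] by simp
  moreover have "y (m + 1) = 0" by (simp add: y_def)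
  moreover have "(-d) ^ (m + 2) \<noteq> 0" using dd by auto
  moreover have "G (m + 1) \<noteq> 0"
  proof
    assume "G (m + 1) = 0"
    then have "q ^ (m + 1) - 1 = 0" using geom_sum_c[of q "m + 1"] unfolding G_def by simp
    then show False using qr by auto
  qed
  ultimately have C0: "C = 0" by simp
  show ?thesis
  proof (rule eq_vecI)
    fix i assume "i < dim_vec (0\<^sub>v m)"
    then have i: "i < m" by simp
    have "q ^ (i + 1) * y (i + 1) = 0" using claim[of i] i C0 by simp
    then have "y (i + 1) = 0" using q0 by simp
    then show "v $ i = 0\<^sub>v m $ i" using i by (simp add: y_def)
  qed (use v in simp)
qed


lemma lie_gen_carrier: assumes "S \<subseteq> carrier_mat m m" shows "lie_gen m S \<subseteq> carrier_mat m m"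
proof
  fix x assume "x \<in> lie_gen m S" then show "x \<in> carrier_mat m m"
    by (induction rule: lie_gen.induct) (use assms in auto)
qed

lemma trace_comm_sum: fixes x y :: "complex mat" assumes x: "x \<in> carrier_mat m m" and y: "y \<in> carrier_mat m m"
  shows "(\<Sum>i<m. (x * y - y * x) $$ (i,i)) = 0"
proof -
  have 1: "(\<Sum>i<m. (x * y) $$ (i,i)) = (\<Sum>i<m. \<Sum>k<m. x $$ (i,k) * y $$ (k,i))"
    if "x \<in> carrier_mat m m" "y \<in> carrier_mat m m" for x y :: "complex mat"
    using that by (intro sum.cong) (auto simp: scalar_prod_def lessThan_atLeast0)
  have "(\<Sum>i<m. (x * y - y * x) $$ (i,i)) = (\<Sum>i<m. (x * y) $$ (i,i)) - (\<Sum>i<m. (y * x) $$ (i,i))"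
  proof -
    have "(\<Sum>i<m. (x * y - y * x) $$ (i,i)) = (\<Sum>i<m. (x * y) $$ (i,i) - (y * x) $$ (i,i))"
      using x y by (intro sum.cong) auto
    then show ?thesis by (simp only: sum_subtractf)
  qed
  also have "\<dots> = 0" unfolding 1[OF x y] 1[OF y x]
    by (subst sum.swap) (simp add: mult.commute)
  finally show ?thesis .
qed

lemma emat_index: "r < m \<Longrightarrow> c < m \<Longrightarrow> emat m i j $$ (r,c) =
  (if 1 \<le> i \<and> i \<le> m \<and> 1 \<le> j \<and> j \<le> m \<and> r = i - 1 \<and> c = j - 1 then 1 else 0)"
  by (simp add: emat_def)

lemma emat_carrier[simp]: "emat m i j \<in> carrier_mat m m" by (simp add: emat_def)

lemma emat_dim[simp]: "dim_row (emat m i j) = m" "dim_col (emat m i j) = m" by (simp_all add: emat_def)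

lemma emat_d: "r < m \<Longrightarrow> c < m \<Longrightarrow> i < m \<Longrightarrow> emat m (Suc i) (Suc i) $$ (r,c) = (if r = i \<and> c = i then 1 else 0)"
  by (simp add: emat_index)

lemma emat_l: "r < m \<Longrightarrow> c < m \<Longrightarrow> i < m \<Longrightarrow> emat m (Suc i) (Suc i - 1) $$ (r,c) = (if 0 < i \<and> r = i \<and> c + 1 = i then 1 else 0)"
  by (auto simp: emat_index)

lemma emat_u: "r < m \<Longrightarrow> c < m \<Longrightarrow> i < m \<Longrightarrow> emat m (Suc i) (Suc i + 1) $$ (r,c) = (if r = i \<and> c = i + 1 then 1 else 0)"
  by (auto simp: emat_index)

lemma umat_carrier: "umat n q i \<in> carrier_mat (n - 1) (n - 1)"
  by (simp add: umat_def)

lemma vmat_carrier: "vmat n q i \<in> carrier_mat (n - 1) (n - 1)"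
  unfolding vmat_def Emat_def
  by (intro add_carrier_mat minus_carrier_mat smult_carrier_mat one_carrier_mat emat_carrier)

lemma umat_eq: assumes m: "m = n - 1" and i: "i < m"
  shows "umat n q (Suc i) = Eu m i i * Tm m q 1"
proof (rule eq_matI)
  fix r c assume rc: "r < dim_row (Eu m i i * Tm m q 1)" "c < dim_col (Eu m i i * Tm m q 1)"
  then have r: "r < m" and c: "c < m" by (auto simp: Tm_def)
  have "(Eu m i i * Tm m q 1) $$ (r, c) = (if r = i then Tm m q 1 $$ (i, c) else 0)"
    by (rule EA_index) (use r c i in auto)
  then show "umat n q (Suc i) $$ (r, c) = (Eu m i i * Tm m q 1) $$ (r, c)"
    using r c i unfolding umat_def m[symmetric]
    by (simp add: Tm_index emat_d emat_l[simplified] emat_u[simplified] kdelta_def)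
qed (auto simp: umat_def Tm_def m)


lemma vmat_dim[simp]: "dim_row (vmat n q i) = n - 1" "dim_col (vmat n q i) = n - 1"
  using vmat_carrier[of n q i] by auto

lemma vmat_eq: assumes m: "m = n - 1" and i: "i < m"
  shows "Eu m i i * Tm m q (-1) = (1 / of_nat m) \<cdot>\<^sub>m vmat n q (Suc i) + (- 1 / of_nat m) \<cdot>\<^sub>m 1\<^sub>m m"
proof (rule eq_matI)
  have mpos: "(of_nat m :: complex) \<noteq> 0" using i by simp
  have nm: "(of_nat n :: complex) = of_nat m + 1" using m i by simp
  fix r c assume rc: "r < dim_row ((1 / of_nat m) \<cdot>\<^sub>m vmat n q (Suc i) + (- 1 / of_nat m) \<cdot>\<^sub>m 1\<^sub>m m)"
     "c < dim_col ((1 / of_nat m) \<cdot>\<^sub>m vmat n q (Suc i) + (- 1 / of_nat m) \<cdot>\<^sub>m 1\<^sub>m m)"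
  then have r: "r < m" and c: "c < m" by (auto simp: vmat_def Emat_def m)
  have "(Eu m i i * Tm m q (-1)) $$ (r, c) = (if r = i then Tm m q (-1) $$ (i, c) else 0)"
    by (rule EA_index) (use r c i in auto)
  moreover have "vmat n q (Suc i) $$ (r,c) =
     (1 - kdelta (Suc i) 1) * ucoef_b q * of_nat m * (if 0 < i \<and> r = i \<and> c + 1 = i then 1 else 0)
     + (2 - of_nat n) * (if r = i \<and> c = i then 1 else 0)
     + (1 - kdelta (Suc i) m) * ucoef_a q * of_nat m * (if r = i \<and> c = i + 1 then 1 else 0)
     + ((if r = c then 1 else 0) - (if r = i \<and> c = i then 1 else 0))"
    using r c i unfolding vmat_def Emat_def m[symmetric]
    by (simp add: emat_d emat_l[simplified] emat_u[simplified] of_nat_diff)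
  moreover have "((1 / of_nat m) \<cdot>\<^sub>m vmat n q (Suc i) + (- 1 / of_nat m) \<cdot>\<^sub>m 1\<^sub>m m) $$ (r, c)
     = (1 / of_nat m) * vmat n q (Suc i) $$ (r,c) + (- 1 / of_nat m) * (if r = c then 1 else 0)"
  proof -
    have vd: "dim_row (vmat n q (Suc i)) = m" "dim_col (vmat n q (Suc i)) = m" using m by simp_all
    show ?thesis using vd r c by simp
  qed
  ultimately show "(Eu m i i * Tm m q (-1)) $$ (r, c) =
      ((1 / of_nat m) \<cdot>\<^sub>m vmat n q (Suc i) + (- 1 / of_nat m) \<cdot>\<^sub>m 1\<^sub>m m) $$ (r, c)"
    using r c i mpos unfolding nm
    by (auto simp: Tm_index kdelta_def field_simps)
qed (auto simp: Tm_def m)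

lemma vmat_trace: assumes m: "m = n - 1" and i: "i < m"
  shows "(\<Sum>r<m. vmat n q (Suc i) $$ (r,r)) = 0"
proof -
  have nm: "(of_nat n :: complex) = of_nat m + 1" using m i by simp
  have "(\<Sum>r<m. vmat n q (Suc i) $$ (r,r)) = (\<Sum>r<m. 1 + (if r = i then 1 - of_nat n else 0))"
    using i unfolding vmat_def Emat_def m[symmetric]
    by (intro sum.cong) (auto simp: emat_d emat_l[simplified] emat_u[simplified])
  also have "\<dots> = of_nat m + (1 - of_nat n)" using i by (simp add: sum.distrib)
  finally show ?thesis unfolding nm by simp
qed


lemma mult_plus_id: fixes A B :: "complex mat"
  assumes A: "A \<in> carrier_mat m m" and B: "B \<in> carrier_mat m m"
  shows "(A + c \<cdot>\<^sub>m 1\<^sub>m m) * (B + e \<cdot>\<^sub>m 1\<^sub>m m) = A * B + (e \<cdot>\<^sub>m A + (c \<cdot>\<^sub>m B + (c * e) \<cdot>\<^sub>m 1\<^sub>m m))"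
proof -
  have I: "c \<cdot>\<^sub>m 1\<^sub>m m \<in> carrier_mat m m" "e \<cdot>\<^sub>m 1\<^sub>m m \<in> carrier_mat m m" by auto
  have "(A + c \<cdot>\<^sub>m 1\<^sub>m m) * (B + e \<cdot>\<^sub>m 1\<^sub>m m) = A * (B + e \<cdot>\<^sub>m 1\<^sub>m m) + (c \<cdot>\<^sub>m 1\<^sub>m m) * (B + e \<cdot>\<^sub>m 1\<^sub>m m)"
    by (rule add_mult_distrib_mat[OF A I(1)]) (use B in auto)
  also have "A * (B + e \<cdot>\<^sub>m 1\<^sub>m m) = A * B + A * (e \<cdot>\<^sub>m 1\<^sub>m m)"
    by (rule mult_add_distrib_mat[OF A B I(2)])
  also have "A * (e \<cdot>\<^sub>m 1\<^sub>m m) = e \<cdot>\<^sub>m A"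
    using mult_smult_distrib[OF A one_carrier_mat[of m]] A by simp
  also have "(c \<cdot>\<^sub>m 1\<^sub>m m) * (B + e \<cdot>\<^sub>m 1\<^sub>m m) = c \<cdot>\<^sub>m (B + e \<cdot>\<^sub>m 1\<^sub>m m)"
    using mult_smult_assoc_mat[OF one_carrier_mat[of m], of "B + e \<cdot>\<^sub>m 1\<^sub>m m" m c] B by simp
  finally show ?thesis
    by (intro eq_matI) (use A B in \<open>auto simp: algebra_simps\<close>)
qed

theorem propositionA5:
  fixes n :: nat and q :: complex
  assumes "n \<ge> 3" and "q \<noteq> 0" and "\<forall>k::nat. k > 0 \<longrightarrow> q ^ k \<noteq> 1"
  shows "lie_gen (n - 1) (umat n q ` {1..n-1}) = gl_mat (n - 1)
       \<and> lie_gen (n - 1) (vmat n q ` {1..n-1}) = sl_mat (n - 1)"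
proof -
  define m where "m = n - 1"
  have m2: "m \<ge> 2" using assms(1) unfolding m_def by simp
  have q1: "1 + q \<noteq> 0"
  proof
    assume "1 + q = 0" then have "q = -1" by (simp add: add_eq_0_iff)
    then have "q ^ 2 = 1" by simp
    with assms(3) show False by auto
  qed
  have anz: "ucoef_a q \<noteq> 0" using q1 assms(2) by (simp add: ucoef_a_def)
  have bnz: "ucoef_b q \<noteq> 0" using q1 by (simp add: ucoef_b_def)
  have inv: "\<exists>Ti \<in> carrier_mat m m. Ti * Tm m q d = 1\<^sub>m m" if "d * d = 1" for d
    by (rule kernel_inv[OF Tm_carrier]) (rule Tm_ker[OF assms(2) assms(3) that])
  have Tent: "\<And>r c. r < m \<Longrightarrow> c < m \<Longrightarrow> Tm m q d $$ (r,c) =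
      (if c = r then d else if c + 1 = r then ucoef_b q else if c = r + 1 then ucoef_a q else 0)" for d
    by (rule Tm_index)
  have idx: "Suc i \<in> {1..m}" if "i < m" for i using that by auto
  define L where "L = lie_gen m (umat n q ` {1..m})"
  have Lc: "L \<subseteq> carrier_mat m m" unfolding L_def
    by (rule lie_gen_carrier) (use umat_carrier m_def in auto)
  obtain Ti where Ti: "Ti \<in> carrier_mat m m" "Ti * Tm m q 1 = 1\<^sub>m m" using inv[of 1] by auto
  have "carrier_mat m m \<subseteq> L"
  proof (rule P_all[OF Tm_carrier Ti Tent _ anz bnz Lc])
    show "0\<^sub>m m m \<in> L" unfolding L_def by (rule lie_gen.zero)
    show "X + Y \<in> L" if "X \<in> L" "Y \<in> L" for X Y using that unfolding L_def by (rule lie_gen.add)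
    show "c \<cdot>\<^sub>m X \<in> L" if "X \<in> L" for X c using that unfolding L_def by (rule lie_gen.smult)
    show "X * Y - Y * X \<in> L" if "X \<in> L" "Y \<in> L" for X Y using that unfolding L_def by (rule lie_gen.bracket)
    show "Eu m i i * Tm m q 1 \<in> L" if "i < m" for i
      unfolding L_def umat_eq[OF m_def that, symmetric] using idx[OF that] by (intro lie_gen.gen) auto
    show "(1::complex) \<noteq> 0" by simp
  qed simp_all
  then have A: "L = gl_mat m" using Lc unfolding gl_mat_def by auto
  define L' where "L' = lie_gen m (vmat n q ` {1..m})"
  have L'c: "L' \<subseteq> carrier_mat m m" unfolding L'_def
    by (rule lie_gen_carrier) (use vmat_carrier m_def in auto)
  have L'sl: "L' \<subseteq> sl_mat m"
  proof
    fix x assume "x \<in> L'"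
    then show "x \<in> sl_mat m" unfolding L'_def
    proof (induction rule: lie_gen.induct)
      case (gen x)
      then obtain j where j: "j \<in> {1..m}" "x = vmat n q j" by auto
      then obtain i where i: "i < m" "j = Suc i" by (cases j) auto
      show ?case unfolding sl_mat_def using vmat_trace[OF m_def i(1), of q] vmat_carrier[of n q] j i m_def by auto
    next
      case zero
      then show ?case unfolding sl_mat_def by auto
    next
      case (add x y)
      then show ?case unfolding sl_mat_def by (auto simp: sum.distrib)
    next
      case (smult x c)
      then show ?case unfolding sl_mat_def by (auto simp: sum_distrib_left[symmetric])
    next
      case (bracket x y)
      then show ?case unfolding sl_mat_def using trace_comm_sum[of x m y] by auto
    qed
  qed
  define N where "N = {l + c \<cdot>\<^sub>m 1\<^sub>m m | l c. l \<in> L'}"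
  have Nc: "N \<subseteq> carrier_mat m m" unfolding N_def using L'c by auto
  obtain Ti' where Ti': "Ti' \<in> carrier_mat m m" "Ti' * Tm m q (-1) = 1\<^sub>m m" using inv[of "-1"] by auto
  have "carrier_mat m m \<subseteq> N"
  proof (rule P_all[OF Tm_carrier Ti' Tent _ anz bnz Nc])
    have "(0\<^sub>m m m :: complex mat) = 0\<^sub>m m m + 0 \<cdot>\<^sub>m 1\<^sub>m m" by (intro eq_matI) auto
    then show "0\<^sub>m m m \<in> N" unfolding N_def L'_def using lie_gen.zero by blast
    show "X + Y \<in> N" if XN: "X \<in> N" "Y \<in> N" for X Y
    proof -
      obtain l1 c1 l2 c2 where X: "X = l1 + c1 \<cdot>\<^sub>m 1\<^sub>m m" "l1 \<in> L'" and Y: "Y = l2 + c2 \<cdot>\<^sub>m 1\<^sub>m m" "l2 \<in> L'"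
        using XN unfolding N_def by blast
      have "X + Y = (l1 + l2) + (c1 + c2) \<cdot>\<^sub>m 1\<^sub>m m" unfolding X Y
        by (intro eq_matI) (use X Y L'c in \<open>auto simp: algebra_simps\<close>)
      moreover have "l1 + l2 \<in> L'" using X Y unfolding L'_def by (intro lie_gen.add)
      ultimately show ?thesis unfolding N_def by blast
    qed
    show "e \<cdot>\<^sub>m X \<in> N" if XN: "X \<in> N" for X e
    proof -
      obtain l1 c1 where X: "X = l1 + c1 \<cdot>\<^sub>m 1\<^sub>m m" "l1 \<in> L'"
        using XN unfolding N_def by blast
      have "e \<cdot>\<^sub>m X = e \<cdot>\<^sub>m l1 + (e * c1) \<cdot>\<^sub>m 1\<^sub>m m" unfolding X
        by (intro eq_matI) (use X L'c in \<open>auto simp: algebra_simps\<close>)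
      moreover have "e \<cdot>\<^sub>m l1 \<in> L'" using X unfolding L'_def by (intro lie_gen.smult)
      ultimately show ?thesis unfolding N_def by blast
    qed
    show "X * Y - Y * X \<in> N" if XN: "X \<in> N" "Y \<in> N" for X Y
    proof -
      obtain l1 c1 l2 c2 where X: "X = l1 + c1 \<cdot>\<^sub>m 1\<^sub>m m" "l1 \<in> L'" and Y: "Y = l2 + c2 \<cdot>\<^sub>m 1\<^sub>m m" "l2 \<in> L'"
        using XN unfolding N_def by blast
      have c1: "l1 \<in> carrier_mat m m" and c2: "l2 \<in> carrier_mat m m" using X Y L'c by auto
      have "X * Y - Y * X = (l1 * l2 - l2 * l1) + 0 \<cdot>\<^sub>m 1\<^sub>m m" unfolding X Y
        unfolding mult_plus_id[OF c1 c2] mult_plus_id[OF c2 c1]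
        by (intro eq_matI) (use c1 c2 in \<open>auto simp: algebra_simps\<close>)
      moreover have "l1 * l2 - l2 * l1 \<in> L'" using X Y unfolding L'_def by (intro lie_gen.bracket)
      ultimately show ?thesis unfolding N_def by blast
    qed
    show "Eu m i i * Tm m q (-1) \<in> N" if "i < m" for i
    proof -
      have "(1 / of_nat m) \<cdot>\<^sub>m vmat n q (Suc i) \<in> L'"
        unfolding L'_def using idx[OF that] by (intro lie_gen.smult lie_gen.gen) auto
      then show ?thesis unfolding vmat_eq[OF m_def that] N_def by blast
    qed
    show "(-1::complex) \<noteq> 0" by simp
  qed simp_all
  have B: "L' = sl_mat m"
  proof
    show "L' \<subseteq> sl_mat m" by (rule L'sl)
    show "sl_mat m \<subseteq> L'"
    proof
      fix X assume X: "X \<in> sl_mat m"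
      then have Xc: "X \<in> carrier_mat m m" unfolding sl_mat_def by auto
      then have "X \<in> N" using \<open>carrier_mat m m \<subseteq> N\<close> by auto
      then obtain l c where l: "X = l + c \<cdot>\<^sub>m 1\<^sub>m m" "l \<in> L'" unfolding N_def by auto
      have lc: "l \<in> carrier_mat m m" using l L'c by auto
      have lt: "(\<Sum>i<m. l $$ (i,i)) = 0" using l(2) L'sl unfolding sl_mat_def by auto
      have "(\<Sum>i<m. X $$ (i,i)) = (\<Sum>i<m. l $$ (i,i) + c)"
        unfolding l(1) using lc by (intro sum.cong) auto
      also have "\<dots> = of_nat m * c" using lt by (simp add: sum.distrib)
      finally have "of_nat m * c = 0" using X unfolding sl_mat_def by auto
      then have "c = 0" using m2 by auto
      then have "X = l" unfolding l(1) by (intro eq_matI) (use lc in auto)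
      then show "X \<in> L'" using l by simp
    qed
  qed
  show ?thesis using A B unfolding L_def L'_def m_def by simp
qed

end
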